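(* Let $D=\{a_1/q_1,\dots,a_r/q_r\}\subset\mathbb{T}$, where each $a_j/q_j$ is an irreducible fraction with $q_j\equiv 2\pmod 4$. Then $\mathrm{Md}_{\mathbb{T}}(D)=1/2$, and there exists a Borel $D$-avoiding set $A\subset\mathbb{T}$ with $\mu(A)=1/2$.
   Context: $\mathbb{T}=\mathbb{R}/\mathbb{Z}$ with Haar probability measure $\mu$; $A$ is $D$-avoiding if $(A-A)\cap D=\emptyset$. $\mathrm{Md}_{\mathbb{T}}(D)=\sup\{\mu(A): A\subset\mathbb{T}\text{ Borel},\ (A-A)\cap D=\emptyset\}$. *)

theory Defs
  imports "HOL-Analysis.Analysis"
begin

text \<open>The torus T = R/Z is modelled by the fundamental domain [0,1) of the reals;
  a subset of T is a subset of [0,1), Haar probability measure is Lebesgue measure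
  restricted to [0,1), and a point of T is represented by any real number
  (differences are taken modulo the integers).\<close>

definition T_avoiding :: "real set \<Rightarrow> real set \<Rightarrow> bool" where
  "T_avoiding D A \<longleftrightarrow> (\<forall>x\<in>A. \<forall>y\<in>A. \<forall>d\<in>D. x - y - d \<notin> \<int>)"

definition Md_T :: "real set \<Rightarrow> real" where
  "Md_T D = Sup {measure lborel A | A. A \<subseteq> {0..<1} \<and> A \<in> sets borel \<and> T_avoiding D A}"

end

theory Submission
  imports Defs
begin

lemma emb1: "S \<subseteq> {0..<1::real} \<Longrightarrow> S \<in> sets borel \<Longrightarrow> emeasure lborel S \<le> ennreal 1"
proof -
  assume "S \<subseteq> {0..<1::real}" "S \<in> sets borel"
  then have "emeasure lborel S \<le> emeasure lborel {0..<1::real}"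
    by (intro emeasure_mono) auto
  then show ?thesis by simp
qed

lemma fin_em: "S \<subseteq> {0..<1::real} \<Longrightarrow> S \<in> sets borel \<Longrightarrow> emeasure lborel S \<noteq> \<infinity>"
  using neq_top_trans[OF ennreal_neq_top emb1] by simp

lemma meas_le1: "S \<subseteq> {0..<1::real} \<Longrightarrow> S \<in> sets borel \<Longrightarrow> measure lborel S \<le> 1"
proof -
  assume a: "S \<subseteq> {0..<1::real}" "S \<in> sets borel"
  have "enn2real (emeasure lborel S) \<le> enn2real (ennreal 1)"
    by (rule enn2real_mono[OF emb1[OF a]]) simp
  then show ?thesis unfolding measure_def by simp
qed

lemma transl_meas:
  fixes S :: "real set" assumes "S \<in> sets borel"
  shows "(\<lambda>x. x - e) -` S \<in> sets borel" "measure lborel ((\<lambda>x. x - e) -` S) = measure lborel S"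
proof -
  have m: "(\<lambda>x::real. x - e) \<in> borel_measurable borel" by simp
  show b: "(\<lambda>x. x - e) -` S \<in> sets borel"
    using measurable_sets[OF m assms] by simp
  have eq: "(\<lambda>x. x - e) -` S = (+) e ` S"
    by (auto simp: image_iff) (metis add.commute diff_add_cancel)
  have "measure lborel ((\<lambda>x. x - e) -` S) = measure lebesgue ((\<lambda>x. x - e) -` S)"
    using b by simp
  also have "\<dots> = measure lebesgue ((+) e ` S)" using eq by simp
  also have "\<dots> = measure lebesgue S" by (rule measure_translation)
  also have "\<dots> = measure lborel S" using assms by simp
  finally show "measure lborel ((\<lambda>x. x - e) -` S) = measure lborel S" .
qed

lemma half_bound:
  fixes A :: "real set"
  assumes A: "A \<subseteq> {0..<1}" "A \<in> sets borel" and av: "\<forall>x\<in>A. \<forall>y\<in>A. x - y - d \<notin> \<int>"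
  shows "measure lborel A \<le> 1/2"
proof -
  define e where "e = frac d"
  have e01: "0 \<le> e" "e < 1" unfolding e_def by (auto simp: frac_lt_1)
  have de: "d - e \<in> \<int>" unfolding e_def by (simp add: frac_def)
  define A1 where "A1 = A \<inter> {..<1-e}"
  define A2 where "A2 = A \<inter> {1-e..}"
  define B1 where "B1 = (\<lambda>x. x - e) -` A1"
  define B2 where "B2 = (\<lambda>x. x - (e - 1)) -` A2"
  have A1b: "A1 \<in> sets borel" and A2b: "A2 \<in> sets borel" using A unfolding A1_def A2_def by auto
  have B1b: "B1 \<in> sets borel" and mB1: "measure lborel B1 = measure lborel A1"
    using transl_meas[OF A1b] unfolding B1_def by auto
  have B2b: "B2 \<in> sets borel" and mB2: "measure lborel B2 = measure lborel A2"
    using transl_meas[OF A2b] unfolding B2_def by auto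
  have A12: "measure lborel A = measure lborel A1 + measure lborel A2"
  proof -
    have "A = A1 \<union> A2" unfolding A1_def A2_def by auto
    moreover have "measure lborel (A1 \<union> A2) = measure lborel A1 + measure lborel A2"
      apply (rule measure_Union)
      using fin_em[OF _ A1b] fin_em[OF _ A2b] A A1b A2b unfolding A1_def A2_def by auto
    ultimately show ?thesis by simp
  qed
  have B1s: "B1 \<subseteq> {e..<1}" using A e01 unfolding B1_def A1_def by auto
  have B2s: "B2 \<subseteq> {0..<e}" using A e01 unfolding B2_def A2_def by auto
  have dis1: "A \<inter> B1 = {}"
  proof (rule ccontr)
    assume "A \<inter> B1 \<noteq> {}"
    then obtain z where z: "z \<in> A" "z - e \<in> A" unfolding B1_def A1_def by auto
    then have "z - (z - e) - d \<notin> \<int>" using av by blast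
    moreover have "z - (z - e) - d = - (d - e)" by simp
    ultimately show False using de by (metis Ints_minus)
  qed
  have dis2: "A \<inter> B2 = {}"
  proof (rule ccontr)
    assume "A \<inter> B2 \<noteq> {}"
    then obtain z where z: "z \<in> A" "z - (e - 1) \<in> A" unfolding B2_def A2_def by auto
    then have "z - (z - (e - 1)) - d \<notin> \<int>" using av by blast
    moreover have "z - (z - (e - 1)) - d = - (d - e) - 1" by simp
    ultimately show False using de by (metis Ints_minus Ints_diff Ints_1)
  qed
  have B1s': "B1 \<subseteq> {0..<1}" using B1s e01 by auto
  have B2s': "B2 \<subseteq> {0..<1}" using B2s e01 by auto
  have fB1: "emeasure lborel B1 \<noteq> \<infinity>" using fin_em[OF B1s' B1b] .
  have fB2: "emeasure lborel B2 \<noteq> \<infinity>" using fin_em[OF B2s' B2b] .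
  have fA: "emeasure lborel A \<noteq> \<infinity>" using fin_em A by auto
  have "measure lborel (B1 \<union> B2) = measure lborel B1 + measure lborel B2"
  proof -
    have "B1 \<inter> B2 = {}" using B1s B2s by fastforce
    then show ?thesis using measure_Union[OF fB1 fB2] B1b B2b by simp
  qed
  moreover have "measure lborel (A \<union> (B1 \<union> B2)) = measure lborel A + measure lborel (B1 \<union> B2)"
    apply (rule measure_Union[OF fA])
    using fin_em[of "B1 \<union> B2"] B1s' B2s' e01 B1b B2b dis1 dis2 A by auto
  moreover have "measure lborel (A \<union> (B1 \<union> B2)) \<le> 1"
    using meas_le1[of "A \<union> (B1 \<union> B2)"] B1s' B2s' e01 B1b B2b A by auto
  ultimately show ?thesis using A12 mB1 mB2 by linarith
qed

lemma odd_int_abs: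
  fixes z :: int assumes "odd z" "\<bar>real_of_int z\<bar> < 1" shows False
proof -
  have "\<bar>z\<bar> < 1" using assms(2) by linarith
  then have "z = 0" by simp
  then show False using assms(1) by simp
qed

definition Aset :: "nat \<Rightarrow> real set" where
  "Aset M = (\<Union>k<M. {real k / real M ..< real k / real M + 1 / (2 * real M)})"

lemma Aset_sub: "M \<ge> 1 \<Longrightarrow> Aset M \<subseteq> {0..<1}"
proof
  fix x assume M: "M \<ge> 1" and "x \<in> Aset M"
  then obtain k where k: "k < M" "real k / real M \<le> x" "x < real k / real M + 1 / (2 * real M)"
    unfolding Aset_def by auto
  have "real k / real M + 1 / (2 * real M) \<le> (real k + 1) / real M"
    using M by (simp add: field_simps)
  also have "\<dots> \<le> 1" using k M by (simp add: field_simps)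
  finally have "x < 1" using k by auto
  moreover have z0: "0 \<le> real k / real M" by simp
  ultimately have "0 \<le> x" "x < 1" using k(2) by linarith+
  then show "x \<in> {0..<1}" by simp
qed

lemma Aset_borel: "Aset M \<in> sets borel"
  unfolding Aset_def by auto

lemma Aset_measure: "M \<ge> 1 \<Longrightarrow> measure lborel (Aset M) = 1/2"
proof -
  assume M: "M \<ge> 1"
  let ?I = "\<lambda>k. {real k / real M ..< real k / real M + 1 / (2 * real M)}"
  have disj: "disjoint_family_on ?I {..<M}"
  proof (unfold disjoint_family_on_def, intro ballI impI)
    fix k l assume kl: "k \<in> {..<M}" "l \<in> {..<M}" "k \<noteq> l"
    show "?I k \<inter> ?I l = {}"
    proof (rule ccontr)
      assume "?I k \<inter> ?I l \<noteq> {}"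
      then obtain x where x: "x \<in> ?I k" "x \<in> ?I l" by blast
      have Mp: "real M > 0" using M by simp
      from x have "real k \<le> real M * x" "real M * x < real k + 1/2"
        "real l \<le> real M * x" "real M * x < real l + 1/2"
        using Mp by (auto simp: field_simps)
      then have "real k < real l + 1" "real l < real k + 1" by linarith+
      then show False using kl(3) by linarith
    qed
  qed
  have "measure lborel (Aset M) = (\<Sum>k<M. measure lborel (?I k))"
    unfolding Aset_def by (rule measure_finite_Union) (use disj in auto)
  also have "\<dots> = (\<Sum>k<M. 1 / (2 * real M))" by simp
  also have "\<dots> = 1/2" using M by simp
  finally show ?thesis .
qed

lemma Aset_avoid:
  assumes M: "M \<ge> 1" and hd: "\<And>d. d \<in> D \<Longrightarrow> \<exists>c::int. odd c \<and> real M * d = real_of_int c / 2"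
  shows "T_avoiding D (Aset M)"
  unfolding T_avoiding_def
proof (intro ballI)
  fix x y d assume x: "x \<in> Aset M" and y: "y \<in> Aset M" and d: "d \<in> D"
  have Mp: "real M > 0" using M by simp
  obtain k where k: "real k \<le> real M * x" "real M * x < real k + 1/2"
    using x Mp unfolding Aset_def by (auto simp: field_simps)
  obtain l where l: "real l \<le> real M * y" "real M * y < real l + 1/2"
    using y Mp unfolding Aset_def by (auto simp: field_simps)
  obtain c :: int where c: "odd c" "real M * d = real_of_int c / 2" using hd[OF d] by blast
  show "x - y - d \<notin> \<int>"
  proof
    assume "x - y - d \<in> \<int>"
    then obtain n :: int where n: "x - y - d = real_of_int n" by (metis Ints_cases)
    define z where "z = 2 * (int M * n + int l - int k) + c"
    have oz: "odd z" unfolding z_def using c(1) by simp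
    have "real M * (x - y - d) = real M * real_of_int n" using n by simp
    then have "real M * x - real M * y - real_of_int c / 2 = real M * real_of_int n"
      using c(2) by (simp add: algebra_simps)
    then have "real_of_int z = 2 * (real M * x) - 2 * real k - 2 * (real M * y) + 2 * real l"
      unfolding z_def by (simp add: algebra_simps)
    then have "-1 < real_of_int z \<and> real_of_int z < 1" using k l by linarith
    then have "\<bar>real_of_int z\<bar> < 1" by (simp add: abs_less_iff)
    then show False using odd_int_abs oz by blast
  qed
qed

lemma key_frac:
  fixes r :: nat and a :: "nat \<Rightarrow> int" and q :: "nat \<Rightarrow> nat"
  assumes q4: "\<And>j. j < r \<Longrightarrow> q j mod 4 = 2"
    and cop: "\<And>j. j < r \<Longrightarrow> coprime (a j) (int (q j))"
    and j: "j < r"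
  shows "\<exists>c::int. odd c \<and> real (\<Prod>i<r. q i div 2) * (real_of_int (a j) / real (q j)) = real_of_int c / 2"
proof -
  have oddm: "odd (q i div 2)" if "i < r" for i
    using q4[OF that] by presburger
  have qe: "q j = 2 * (q j div 2)" using q4[OF j] by presburger
  define P where "P = (\<Prod>i\<in>{..<r} - {j}. q i div 2)"
  have oP: "odd P" unfolding P_def using oddm by (simp add: even_prod_iff)
  have Pe: "(\<Prod>i<r. q i div 2) = (q j div 2) * P"
    unfolding P_def using j by (simp add: prod.remove)
  have oa: "odd (a j)"
  proof
    assume "even (a j)"
    moreover have "even (int (q j))" using q4[OF j] by presburger
    ultimately show False using coprime_common_divisor[OF cop[OF j], of 2] by simp
  qed
  have mpos: "q j div 2 > 0" using q4[OF j] by presburger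
  show ?thesis
  proof (intro exI conjI)
    show "odd (a j * int P)" using oa oP by simp
    have "real (q j) = 2 * real (q j div 2)" using qe by (metis of_nat_mult of_nat_numeral)
    then show "real (\<Prod>i<r. q i div 2) * (real_of_int (a j) / real (q j)) = real_of_int (a j * int P) / 2"
      using mpos by (simp add: Pe field_simps)
  qed
qed

theorem mainTheorem16:
  fixes r :: nat and a :: "nat \<Rightarrow> int" and q :: "nat \<Rightarrow> nat" and D :: "real set"
  assumes "r \<ge> 1"
    and "\<And>j. j < r \<Longrightarrow> q j mod 4 = 2"
    and "\<And>j. j < r \<Longrightarrow> coprime (a j) (int (q j))"
    and "D = {real_of_int (a j) / real (q j) | j. j < r}"
  shows "Md_T D = 1/2 \<and>
    (\<exists>A. A \<subseteq> {0..<1} \<and> A \<in> sets borel \<and> T_avoiding D A \<and> measure lborel A = 1/2)"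
proof -
  define M where "M = (\<Prod>i<r. q i div 2)"
  have M1: "M \<ge> 1" unfolding M_def
  proof -
    have "\<forall>i\<in>{..<r}. q i div 2 \<noteq> 0" 
    proof
      fix i assume "i \<in> {..<r}"
      then have "q i mod 4 = 2" using assms(2) by simp
      then show "q i div 2 \<noteq> 0" by presburger
    qed
    then show "(\<Prod>i<r. q i div 2) \<ge> 1" by (simp add: Suc_le_eq)
  qed
  have hd: "\<exists>c::int. odd c \<and> real M * d = real_of_int c / 2" if dD: "d \<in> D" for d
  proof -
    obtain j where j: "j < r" "d = real_of_int (a j) / real (q j)" using dD assms(4) by blast
    show ?thesis unfolding M_def j(2) by (rule key_frac[OF assms(2) assms(3) j(1)])
  qed
  have ex: "Aset M \<subseteq> {0..<1} \<and> Aset M \<in> sets borel \<and> T_avoiding D (Aset M) \<and> measure lborel (Aset M) = 1/2"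
    using Aset_sub[OF M1] Aset_borel Aset_measure[OF M1] Aset_avoid[OF M1 hd] by blast
  have d0: "real_of_int (a 0) / real (q 0) \<in> D" using assms(1,4) by auto
  have ub: "x \<le> 1/2" if "x \<in> {measure lborel A | A. A \<subseteq> {0..<1} \<and> A \<in> sets borel \<and> T_avoiding D A}" for x
  proof -
    from that obtain A where A: "x = measure lborel A" "A \<subseteq> {0..<1}" "A \<in> sets borel" "T_avoiding D A" by blast
    have "\<forall>x\<in>A. \<forall>y\<in>A. x - y - real_of_int (a 0) / real (q 0) \<notin> \<int>"
      using A(4) d0 unfolding T_avoiding_def by blast
    from half_bound[OF A(2,3) this] show ?thesis using A(1) by simp
  qed
  have "Md_T D = 1/2" unfolding Md_T_def
  proof (rule cSup_eq_maximum)
    show "1/2 \<in> {measure lborel A | A. A \<subseteq> {0..<1} \<and> A \<in> sets borel \<and> T_avoiding D A}"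
    proof -
      have "measure lborel (Aset M) \<in> {measure lborel A | A. A \<subseteq> {0..<1} \<and> A \<in> sets borel \<and> T_avoiding D A}"
        using ex by blast
      then show ?thesis using ex by simp
    qed
    show "\<And>x. x \<in> {measure lborel A | A. A \<subseteq> {0..<1} \<and> A \<in> sets borel \<and> T_avoiding D A} \<Longrightarrow> x \<le> 1/2"
      by (rule ub)
  qed
  moreover have "\<exists>A. A \<subseteq> {0..<1} \<and> A \<in> sets borel \<and> T_avoiding D A \<and> measure lborel A = 1/2"
    using ex by (intro exI[of _ "Aset M"]) simp
  ultimately show ?thesis by (rule conjI)
qed

end
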